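(* Let $H$ be a simple $3$-connected graph and $\mathcal{F}$ an arbitrary family of injective maps from $X=\{a,b,c,d\}$ to $V(H)$. Let $G$ be a $2$-connected graph with $X\subseteq V(G)$ and a $2$-separation $(A,B)$ with $A\cap B=\{u,v\}$. Suppose $u,v\in X$, and that some vertex of $X\setminus\{u,v\}$ lies in $A\setminus\{u,v\}$ and some vertex of $X\setminus\{u,v\}$ lies in $B\setminus\{u,v\}$. Then $G$ does not have an $H(X)$-minor.
   Context: A $2$-separation is a pair $(A,B)$ with $A\cup B=V(G)$, $|A\cap B|\le2$ and no edge between $A\setminus B$ and $B\setminus A$. An $H$-model in $G$ is a family $\{G_x:x\in V(H)\}$ of pairwise vertex-disjoint connected subgraphs of $G$ such that for every edge $xy\in E(H)$ some vertex of $G_x$ is adjacent in $G$ to some vertex of $G_y$. For injective $\pi:X\to V(H)$, $G$ has an $H(X)$-minor with respect to $\pi$ if there is an $H$-model with $w\in V(G_{\pi(w)})$ for all $w\in X$; $G$ has an $H(X)$-minor (with respect to $\mathcal{F}$) if this holds for some $\pi\in\mathcal{F}$. *)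

theory Defs
  imports Main
begin

definition graph :: "'a set \<Rightarrow> ('a \<Rightarrow> 'a \<Rightarrow> bool) \<Rightarrow> bool" where
  "graph V E \<longleftrightarrow> finite V \<and> (\<forall>x y. E x y \<longrightarrow> x \<in> V \<and> y \<in> V)
     \<and> (\<forall>x y. E x y \<longrightarrow> E y x) \<and> (\<forall>x. \<not> E x x)"

definition connected_on :: "('a \<Rightarrow> 'a \<Rightarrow> bool) \<Rightarrow> 'a set \<Rightarrow> bool" where
  "connected_on E S \<longleftrightarrow> S \<noteq> {} \<and>
     (\<forall>x\<in>S. \<forall>y\<in>S. (\<lambda>p q. E p q \<and> p \<in> S \<and> q \<in> S)\<^sup>*\<^sup>* x y)"

definition k_connected :: "nat \<Rightarrow> 'a set \<Rightarrow> ('a \<Rightarrow> 'a \<Rightarrow> bool) \<Rightarrow> bool" where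
  "k_connected k V E \<longleftrightarrow> card V > k \<and>
     (\<forall>S. S \<subseteq> V \<and> card S < k \<longrightarrow> connected_on E (V - S))"

definition two_separation ::
  "'a set \<Rightarrow> ('a \<Rightarrow> 'a \<Rightarrow> bool) \<Rightarrow> 'a set \<Rightarrow> 'a set \<Rightarrow> bool" where
  "two_separation V E A B \<longleftrightarrow> A \<union> B = V \<and> card (A \<inter> B) \<le> 2 \<and>
     (\<forall>x\<in>A - B. \<forall>y\<in>B - A. \<not> E x y)"

definition is_model ::
  "'b set \<Rightarrow> ('b \<Rightarrow> 'b \<Rightarrow> bool) \<Rightarrow> 'a set \<Rightarrow> ('a \<Rightarrow> 'a \<Rightarrow> bool)
     \<Rightarrow> ('b \<Rightarrow> 'a set) \<Rightarrow> bool" where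
  "is_model VH EH VG EG M \<longleftrightarrow>
     (\<forall>x\<in>VH. M x \<subseteq> VG \<and> connected_on EG (M x)) \<and>
     (\<forall>x\<in>VH. \<forall>y\<in>VH. x \<noteq> y \<longrightarrow> M x \<inter> M y = {}) \<and>
     (\<forall>x\<in>VH. \<forall>y\<in>VH. EH x y \<longrightarrow> (\<exists>p\<in>M x. \<exists>q\<in>M y. EG p q))"

definition has_rooted_minor_wrt ::
  "'b set \<Rightarrow> ('b \<Rightarrow> 'b \<Rightarrow> bool) \<Rightarrow> 'a set \<Rightarrow> ('a \<Rightarrow> 'a \<Rightarrow> bool)
     \<Rightarrow> 'a set \<Rightarrow> ('a \<Rightarrow> 'b) \<Rightarrow> bool" where
  "has_rooted_minor_wrt VH EH VG EG X \<pi> \<longleftrightarrow>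
     (\<exists>M. is_model VH EH VG EG M \<and> (\<forall>w\<in>X. w \<in> M (\<pi> w)))"

definition has_rooted_minor ::
  "'b set \<Rightarrow> ('b \<Rightarrow> 'b \<Rightarrow> bool) \<Rightarrow> 'a set \<Rightarrow> ('a \<Rightarrow> 'a \<Rightarrow> bool)
     \<Rightarrow> 'a set \<Rightarrow> ('a \<Rightarrow> 'b) set \<Rightarrow> bool" where
  "has_rooted_minor VH EH VG EG X F \<longleftrightarrow>
     (\<exists>\<pi>\<in>F. has_rooted_minor_wrt VH EH VG EG X \<pi>)"

end

theory Submission
  imports Defs
begin

lemma rt_inv:
  assumes "R\<^sup>*\<^sup>* z w" "P z" "\<And>p q. R p q \<Longrightarrow> P p \<Longrightarrow> P q"
  shows "P w"
  using assms(1,2) by (induction rule: rtranclp_induct) (auto intro: assms(3))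

lemma side_lemma:
  assumes sep: "two_separation VG EG A B" and C: "connected_on EG C" "C \<subseteq> VG"
    and dis: "C \<inter> (A \<inter> B) = {}" and z: "z \<in> C" "z \<in> A - B"
  shows "C \<subseteq> A - B"
proof
  fix w assume w: "w \<in> C"
  from C(1) z w have r: "(\<lambda>p q. EG p q \<and> p \<in> C \<and> q \<in> C)\<^sup>*\<^sup>* z w"
    unfolding connected_on_def by blast
  show "w \<in> A - B"
  proof (rule rt_inv[OF r, where P="\<lambda>p. p \<in> A - B"])
    show "z \<in> A - B" using z by simp
    fix p q assume "EG p q \<and> p \<in> C \<and> q \<in> C" "p \<in> A - B"
    moreover have "A \<union> B = VG" and "\<And>s t. s \<in> A - B \<Longrightarrow> t \<in> B - A \<Longrightarrow> \<not> EG s t"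
      using sep unfolding two_separation_def by auto
    ultimately show "q \<in> A - B" using C(2) dis by blast
  qed
qed

theorem mainTheorem13:
  fixes VH :: "'b set" and EH :: "'b \<Rightarrow> 'b \<Rightarrow> bool"
    and VG :: "'a set" and EG :: "'a \<Rightarrow> 'a \<Rightarrow> bool"
    and a b c d u v :: 'a and X A B :: "'a set"
    and F :: "('a \<Rightarrow> 'b) set"
  assumes "graph VH EH" and "k_connected 3 VH EH"
    and "X = {a, b, c, d}" and "card X = 4"
    and "\<forall>\<pi>\<in>F. inj_on \<pi> X \<and> \<pi> ` X \<subseteq> VH"
    and "graph VG EG" and "k_connected 2 VG EG" and "X \<subseteq> VG"
    and "two_separation VG EG A B" and "A \<inter> B = {u, v}"
    and "u \<in> X" and "v \<in> X"
    and "\<exists>x\<in>X - {u, v}. x \<in> A - {u, v}"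
    and "\<exists>y\<in>X - {u, v}. y \<in> B - {u, v}"
  shows "\<not> has_rooted_minor VH EH VG EG X F"
proof
  assume "has_rooted_minor VH EH VG EG X F"
  then obtain \<pi> M where pi: "\<pi> \<in> F" and M: "is_model VH EH VG EG M"
    and roots: "\<forall>w\<in>X. w \<in> M (\<pi> w)"
    unfolding has_rooted_minor_def has_rooted_minor_wrt_def by blast
  obtain x where x: "x \<in> X - {u, v}" "x \<in> A - {u, v}" using assms(13) by blast
  obtain y where y: "y \<in> X - {u, v}" "y \<in> B - {u, v}" using assms(14) by blast
  have sep: "two_separation VG EG A B" by fact
  have AB: "A \<inter> B = {u, v}" by fact
  have xAB: "x \<in> A - B" using x AB by blast
  have yBA: "y \<in> B - A" using y AB by blast
  have inj: "inj_on \<pi> X" and img: "\<pi> ` X \<subseteq> VH" using assms(5) pi by auto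
  define S where "S = {\<pi> u, \<pi> v}"
  have cardS: "card S < 3" unfolding S_def by (simp add: card_insert_if)
  have SV: "S \<subseteq> VH" using img assms(11,12) unfolding S_def by auto
  have kc: "\<forall>S. S \<subseteq> VH \<and> card S < 3 \<longrightarrow> connected_on EH (VH - S)"
    using assms(2) unfolding k_connected_def by simp
  have conn: "connected_on EH (VH - S)" using kc cardS SV by blast
  have px: "\<pi> x \<in> VH - S"
  proof -
    have "\<pi> x \<noteq> \<pi> u" "\<pi> x \<noteq> \<pi> v" using x inj assms(11,12) by (auto simp: inj_on_eq_iff)
    moreover have "\<pi> x \<in> VH" using x img by auto
    ultimately show ?thesis unfolding S_def by auto
  qed
  have py: "\<pi> y \<in> VH - S"
  proof -
    have "\<pi> y \<noteq> \<pi> u" "\<pi> y \<noteq> \<pi> v" using y inj assms(11,12) by (auto simp: inj_on_eq_iff)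
    moreover have "\<pi> y \<in> VH" using y img by auto
    ultimately show ?thesis unfolding S_def by auto
  qed
  have UAB: "A \<union> B = VG" and noE: "\<And>s t. s \<in> A - B \<Longrightarrow> t \<in> B - A \<Longrightarrow> \<not> EG s t"
    using sep unfolding two_separation_def by auto
  have r: "(\<lambda>p q. EH p q \<and> p \<in> VH - S \<and> q \<in> VH - S)\<^sup>*\<^sup>* (\<pi> x) (\<pi> y)"
  proof -
    have "\<forall>p\<in>VH - S. \<forall>q\<in>VH - S. (\<lambda>p q. EH p q \<and> p \<in> VH - S \<and> q \<in> VH - S)\<^sup>*\<^sup>* p q"
      using conn unfolding connected_on_def by simp
    then show ?thesis using px py by blast
  qed
  have Mprops: "\<And>h. h \<in> VH \<Longrightarrow> M h \<subseteq> VG \<and> connected_on EG (M h)"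
    "\<And>h h'. h \<in> VH \<Longrightarrow> h' \<in> VH \<Longrightarrow> h \<noteq> h' \<Longrightarrow> M h \<inter> M h' = {}"
    "\<And>h h'. h \<in> VH \<Longrightarrow> h' \<in> VH \<Longrightarrow> EH h h' \<Longrightarrow> \<exists>p\<in>M h. \<exists>q\<in>M h'. EG p q"
  proof -
    have M': "(\<forall>x\<in>VH. M x \<subseteq> VG \<and> connected_on EG (M x)) \<and>
     (\<forall>x\<in>VH. \<forall>y\<in>VH. x \<noteq> y \<longrightarrow> M x \<inter> M y = {}) \<and>
     (\<forall>x\<in>VH. \<forall>y\<in>VH. EH x y \<longrightarrow> (\<exists>p\<in>M x. \<exists>q\<in>M y. EG p q))"
      using M unfolding is_model_def by simp
    show "\<And>h. h \<in> VH \<Longrightarrow> M h \<subseteq> VG \<and> connected_on EG (M h)" using M' by simp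
    show "\<And>h h'. h \<in> VH \<Longrightarrow> h' \<in> VH \<Longrightarrow> h \<noteq> h' \<Longrightarrow> M h \<inter> M h' = {}" using M' by simp
    show "\<And>h h'. h \<in> VH \<Longrightarrow> h' \<in> VH \<Longrightarrow> EH h h' \<Longrightarrow> \<exists>p\<in>M h. \<exists>q\<in>M h'. EG p q" using M' by simp
  qed
  have uM: "u \<in> M (\<pi> u)" "v \<in> M (\<pi> v)" using roots assms(11,12) by auto
  have avoid: "M h \<inter> (A \<inter> B) = {}" if "h \<in> VH - S" for h
  proof -
    have "\<pi> u \<in> VH" "\<pi> v \<in> VH" using SV S_def by auto
    moreover have "h \<noteq> \<pi> u" "h \<noteq> \<pi> v" "h \<in> VH" using that unfolding S_def by auto
    ultimately have "M h \<inter> M (\<pi> u) = {}" "M h \<inter> M (\<pi> v) = {}"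
      using Mprops(2)[of h "\<pi> u"] Mprops(2)[of h "\<pi> v"] by simp_all
    then have "u \<notin> M h" "v \<notin> M h" using uM by blast+
    then show ?thesis unfolding AB by simp
  qed
  have "\<pi> y \<in> VH - S \<and> M (\<pi> y) \<subseteq> A - B"
  proof (rule rt_inv[OF r, where P="\<lambda>h. h \<in> VH - S \<and> M h \<subseteq> A - B"])
    show "\<pi> x \<in> VH - S \<and> M (\<pi> x) \<subseteq> A - B"
    proof -
      have "\<pi> x \<in> VH" using px by simp
      then have c: "M (\<pi> x) \<subseteq> VG \<and> connected_on EG (M (\<pi> x))" by (rule Mprops(1))
      have xin: "x \<in> M (\<pi> x)" using roots x by simp
      have "M (\<pi> x) \<subseteq> A - B" using side_lemma[OF sep conjunct2[OF c] conjunct1[OF c] avoid[OF px] xin xAB] .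
      then show ?thesis using px by simp
    qed
    fix p q assume e: "EH p q \<and> p \<in> VH - S \<and> q \<in> VH - S" and hp: "p \<in> VH - S \<and> M p \<subseteq> A - B"
    have pq: "p \<in> VH" "q \<in> VH" "EH p q" using e by auto
    obtain s t where st: "s \<in> M p" "t \<in> M q" "EG s t" using Mprops(3)[OF pq] by blast
    have tV: "t \<in> VG" using Mprops(1)[OF pq(2)] st(2) by blast
    have "t \<in> A - B"
    proof -
      have "s \<in> A - B" using st hp by blast
      then have "t \<notin> B - A" using noE st(3) by blast
      moreover have "t \<notin> A \<inter> B" using avoid[of q] e st(2) by blast
      ultimately show ?thesis using tV UAB by blast
    qed
    moreover have qS: "q \<in> VH - S" using e by simp
    moreover have c: "M q \<subseteq> VG \<and> connected_on EG (M q)" using Mprops(1)[OF pq(2)] .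
    ultimately have "M q \<subseteq> A - B"
      using side_lemma[OF sep conjunct2[OF c] conjunct1[OF c] avoid[OF qS] st(2)] by simp
    then show "q \<in> VH - S \<and> M q \<subseteq> A - B" using e by simp
  qed
  moreover have "y \<in> M (\<pi> y)" using roots y by simp
  ultimately have "y \<in> A - B" by blast
  then show False using yBA by simp
qed

end
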